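(* Let $G$ be a diamond-free CIS graph. Then $\alpha(G)\cdot\omega(G)\ge |V(G)|$. Consequently, $G$ has a clique or a stable set of size at least $|V(G)|^{1/2}$.
   Context: $\alpha(G)$ is the maximum size of a stable set and $\omega(G)$ the maximum size of a clique in $G$. A clique is strong if it intersects every inclusion-maximal stable set; a graph is CIS if every inclusion-maximal clique is strong. The diamond is $K_4$ minus one edge; diamond-free means no induced subgraph isomorphic to the diamond. *)

theory Defs
  imports Main Complex_Main
begin

text \<open>A finite simple graph: a finite vertex set V and a symmetric, irreflexive
adjacency relation E (only its restriction to V matters).\<close>

definition graph :: "'a set \<Rightarrow> ('a \<Rightarrow> 'a \<Rightarrow> bool) \<Rightarrow> bool" where
  "graph V E \<longleftrightarrow> finite V \<and> (\<forall>x y. E x y \<longrightarrow> E y x) \<and> (\<forall>x. \<not> E x x)"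

definition clique :: "'a set \<Rightarrow> ('a \<Rightarrow> 'a \<Rightarrow> bool) \<Rightarrow> 'a set \<Rightarrow> bool" where
  "clique V E K \<longleftrightarrow> K \<subseteq> V \<and> (\<forall>x\<in>K. \<forall>y\<in>K. x \<noteq> y \<longrightarrow> E x y)"

definition stable :: "'a set \<Rightarrow> ('a \<Rightarrow> 'a \<Rightarrow> bool) \<Rightarrow> 'a set \<Rightarrow> bool" where
  "stable V E S \<longleftrightarrow> S \<subseteq> V \<and> (\<forall>x\<in>S. \<forall>y\<in>S. \<not> E x y)"

definition maximal_clique :: "'a set \<Rightarrow> ('a \<Rightarrow> 'a \<Rightarrow> bool) \<Rightarrow> 'a set \<Rightarrow> bool" where
  "maximal_clique V E K \<longleftrightarrow> clique V E K \<and> (\<forall>K'. clique V E K' \<and> K \<subseteq> K' \<longrightarrow> K' = K)"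

definition maximal_stable :: "'a set \<Rightarrow> ('a \<Rightarrow> 'a \<Rightarrow> bool) \<Rightarrow> 'a set \<Rightarrow> bool" where
  "maximal_stable V E S \<longleftrightarrow> stable V E S \<and> (\<forall>S'. stable V E S' \<and> S \<subseteq> S' \<longrightarrow> S' = S)"

definition alpha :: "'a set \<Rightarrow> ('a \<Rightarrow> 'a \<Rightarrow> bool) \<Rightarrow> nat" where
  "alpha V E = Max (card ` {S. stable V E S})"

definition omega :: "'a set \<Rightarrow> ('a \<Rightarrow> 'a \<Rightarrow> bool) \<Rightarrow> nat" where
  "omega V E = Max (card ` {K. clique V E K})"

definition strong_clique :: "'a set \<Rightarrow> ('a \<Rightarrow> 'a \<Rightarrow> bool) \<Rightarrow> 'a set \<Rightarrow> bool" where
  "strong_clique V E K \<longleftrightarrow> clique V E K \<and> (\<forall>S. maximal_stable V E S \<longrightarrow> K \<inter> S \<noteq> {})"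

definition CIS :: "'a set \<Rightarrow> ('a \<Rightarrow> 'a \<Rightarrow> bool) \<Rightarrow> bool" where
  "CIS V E \<longleftrightarrow> (\<forall>K. maximal_clique V E K \<longrightarrow> strong_clique V E K)"

definition diamond_free :: "'a set \<Rightarrow> ('a \<Rightarrow> 'a \<Rightarrow> bool) \<Rightarrow> bool" where
  "diamond_free V E \<longleftrightarrow> \<not> (\<exists>a\<in>V. \<exists>b\<in>V. \<exists>c\<in>V. \<exists>d\<in>V.
      distinct [a, b, c, d] \<and> E a b \<and> E a c \<and> E a d \<and> E b c \<and> E b d \<and> \<not> E c d)"

end

theory Submission imports Defs begin


lemma ex_maximal:
  assumes "finite V" "P K" "\<And>M. P M \<Longrightarrow> M \<subseteq> V"
  shows "\<exists>M. P M \<and> K \<subseteq> M \<and> (\<forall>M'. P M' \<and> M \<subseteq> M' \<longrightarrow> M' = M)"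
proof -
  let ?F = "{M. P M \<and> K \<subseteq> M}"
  have fin: "finite ?F" by (rule finite_subset[of _ "Pow V"]) (use assms in auto)
  have ne: "card ` ?F \<noteq> {}" using assms(2) by auto
  have "Max (card ` ?F) \<in> card ` ?F" using fin ne by (intro Max_in) auto
  then obtain M where M: "M \<in> ?F" "card M = Max (card ` ?F)" by auto
  show ?thesis
  proof (intro exI conjI allI impI)
    show "P M" "K \<subseteq> M" using M by auto
    fix M' assume H: "P M' \<and> M \<subseteq> M'"
    then have "M' \<in> ?F" using M by auto
    then have "card M' \<le> card M" using M fin by (simp add: Max_ge)
    moreover have "finite M'" using H assms by (meson finite_subset)
    ultimately show "M' = M" using H card_seteq[of M' M] by blast
  qed
qed

lemma finite_stables: "finite V \<Longrightarrow> finite {S. stable V E S}"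
  by (rule finite_subset[of _ "Pow V"]) (auto simp: stable_def)
lemma finite_cliques: "finite V \<Longrightarrow> finite {S. clique V E S}"
  by (rule finite_subset[of _ "Pow V"]) (auto simp: clique_def)

lemma alpha_ge: "finite V \<Longrightarrow> stable V E S \<Longrightarrow> card S \<le> alpha V E"
  unfolding alpha_def by (rule Max_ge) (auto simp: finite_stables)
lemma omega_ge: "finite V \<Longrightarrow> clique V E S \<Longrightarrow> card S \<le> omega V E"
  unfolding omega_def by (rule Max_ge) (auto simp: finite_cliques)
lemma alpha_att: "finite V \<Longrightarrow> \<exists>S. stable V E S \<and> card S = alpha V E"
proof -
  assume f: "finite V"
  have "{} \<in> {S. stable V E S}" by (simp add: stable_def)
  then have "alpha V E \<in> card ` {S. stable V E S}" unfolding alpha_def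
    using f by (intro Max_in) (auto simp: finite_stables)
  then show ?thesis by auto
qed
lemma omega_att: "finite V \<Longrightarrow> \<exists>S. clique V E S \<and> card S = omega V E"
proof -
  assume f: "finite V"
  have "{} \<in> {S. clique V E S}" by (simp add: clique_def)
  then have "omega V E \<in> card ` {S. clique V E S}" unfolding omega_def
    using f by (intro Max_in) (auto simp: finite_cliques)
  then show ?thesis by auto
qed

lemma ext_clique: assumes "finite V" "clique V E K" shows "\<exists>Q. maximal_clique V E Q \<and> K \<subseteq> Q"
proof -
  have "\<exists>M. clique V E M \<and> K \<subseteq> M \<and> (\<forall>M'. clique V E M' \<and> M \<subseteq> M' \<longrightarrow> M' = M)"
    by (rule ex_maximal[of V "clique V E" K]) (use assms in \<open>auto simp: clique_def\<close>)
  then show ?thesis unfolding maximal_clique_def by auto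
qed
lemma ext_stable: assumes "finite V" "stable V E K" shows "\<exists>Q. maximal_stable V E Q \<and> K \<subseteq> Q"
proof -
  have "\<exists>M. stable V E M \<and> K \<subseteq> M \<and> (\<forall>M'. stable V E M' \<and> M \<subseteq> M' \<longrightarrow> M' = M)"
    by (rule ex_maximal[of V "stable V E" K]) (use assms in \<open>auto simp: stable_def\<close>)
  then show ?thesis unfolding maximal_stable_def by auto
qed

lemma two_cliques:
  assumes g: "graph V E" and d: "diamond_free V E"
    and Q1: "maximal_clique V E Q1" and Q2: "maximal_clique V E Q2"
    and x: "x \<in> Q1" "x \<in> Q2" and y: "y \<in> Q1" "y \<in> Q2" and xy: "x \<noteq> y"
  shows "Q1 = Q2"
proof (rule ccontr)
  assume ne: "Q1 \<noteq> Q2"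
  have sym: "\<And>a b. E a b \<Longrightarrow> E b a" and irr: "\<And>a. \<not> E a a" using g by (auto simp: graph_def)
  have "\<not> Q1 \<subseteq> Q2" using Q1 Q2 ne unfolding maximal_clique_def by blast
  then obtain a where a: "a \<in> Q1" "a \<notin> Q2" by blast
  have "\<not> clique V E (insert a Q2)"
  proof
    assume "clique V E (insert a Q2)"
    then have "insert a Q2 = Q2" using Q2 unfolding maximal_clique_def by blast
    then show False using a by auto
  qed
  moreover have "a \<in> V" using a Q1 by (auto simp: maximal_clique_def clique_def)
  ultimately obtain b where b: "b \<in> Q2" "b \<noteq> a" "\<not> E a b"
    using Q2 sym unfolding maximal_clique_def clique_def by auto
  have bQ1: "b \<notin> Q1" using b a Q1 unfolding maximal_clique_def clique_def by auto
  have V: "x \<in> V" "y \<in> V" "a \<in> V" "b \<in> V" using x y a b Q1 Q2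
    by (auto simp: maximal_clique_def clique_def)
  have dist: "distinct [x, y, a, b]" using xy a b bQ1 x y by auto
  have "E x y" "E x a" "E y a" using Q1 x y a xy dist unfolding maximal_clique_def clique_def by auto
  moreover have "E x b" "E y b" using Q2 x y b dist unfolding maximal_clique_def clique_def by auto
  ultimately show False using d V dist b(3) unfolding diamond_free_def by blast
qed




locale dcis =
  fixes V :: "'a set" and E :: "'a \<Rightarrow> 'a \<Rightarrow> bool" and S :: "'a set"
  assumes g: "graph V E" and df: "diamond_free V E" and cis: "CIS V E"
    and St: "stable V E S" and Sc: "card S = alpha V E"
begin

definition "Qs = {Q. maximal_clique V E Q}"
definition "c x = card {Q \<in> Qs. x \<in> Q}"

lemma finV: "finite V" and sym: "E a b \<Longrightarrow> E b a" and irr: "\<not> E a a"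
  using g by (auto simp: graph_def)

lemma finQs: "finite Qs"
  unfolding Qs_def by (rule finite_subset[of _ "Pow V"]) (auto simp: maximal_clique_def clique_def finV)

lemma Qsub: "Q \<in> Qs \<Longrightarrow> Q \<subseteq> V"
  by (auto simp: Qs_def maximal_clique_def clique_def)

lemma S_max: "maximal_stable V E S"
  unfolding maximal_stable_def
proof (intro conjI allI impI St)
  fix S' assume H: "stable V E S' \<and> S \<subseteq> S'"
  then have "card S' \<le> card S" using alpha_ge[OF finV] Sc by auto
  moreover have "finite S'" using H finV by (auto simp: stable_def intro: finite_subset)
  ultimately show "S' = S" using H card_seteq[of S' S] by blast
qed

lemma meetS: assumes "Q \<in> Qs" shows "Q \<inter> S \<noteq> {}"
proof -
  have "strong_clique V E Q" using cis assms unfolding CIS_def Qs_def by simp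
  then show ?thesis using S_max unfolding strong_clique_def by simp
qed

lemma uniqS: "Q \<in> Qs \<Longrightarrow> s1 \<in> Q \<Longrightarrow> s1 \<in> S \<Longrightarrow> s2 \<in> Q \<Longrightarrow> s2 \<in> S \<Longrightarrow> s1 = s2"
proof (rule ccontr)
  assume H: "Q \<in> Qs" "s1 \<in> Q" "s1 \<in> S" "s2 \<in> Q" "s2 \<in> S" "s1 \<noteq> s2"
  have "clique V E Q" using H(1) by (simp add: Qs_def maximal_clique_def)
  then have "E s1 s2" using H unfolding clique_def by blast
  moreover have "\<not> E s1 s2" using St H unfolding stable_def by blast
  ultimately show False by simp
qed

lemma QS_single: "Q \<in> Qs \<Longrightarrow> s \<in> Q \<Longrightarrow> s \<in> S \<Longrightarrow> Q \<inter> S = {s}"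
  using uniqS by blast

lemma c_pos: "x \<in> V \<Longrightarrow> c x \<ge> 1"
proof -
  assume x: "x \<in> V"
  have "clique V E {x}" using x by (simp add: clique_def)
  then obtain Q where "maximal_clique V E Q" "x \<in> Q" using ext_clique[OF finV] by blast
  then have "{Q \<in> Qs. x \<in> Q} \<noteq> {}" by (auto simp: Qs_def)
  moreover have "finite {Q \<in> Qs. x \<in> Q}" using finQs by auto
  ultimately show ?thesis unfolding c_def by (simp add: Suc_le_eq card_gt_0_iff)
qed

lemma key:
  assumes v: "v \<in> V" "v \<notin> S" and s: "s \<in> S" and Q: "Q \<in> Qs" "v \<in> Q" "s \<in> Q"
  shows "c s \<le> c v"
proof -
  have finS: "finite S" using St finV by (auto simp: stable_def intro: finite_subset)
  have vs: "v \<noteq> s" using v s by auto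
  have Evs: "E v s" using Q vs by (auto simp: Qs_def maximal_clique_def clique_def)
  define X where "X = {x \<in> S. E v x}"
  have sX: "s \<in> X" using s Evs by (simp add: X_def)
  have XS: "X \<subseteq> S" by (auto simp: X_def)
  define T0 where "T0 = (S - X) \<union> {v}"
  have T0st: "stable V E T0"
    using St v unfolding T0_def X_def stable_def by (auto dest: sym simp: irr)
  obtain T where T: "maximal_stable V E T" "T0 \<subseteq> T" using ext_stable[OF finV T0st] by blast
  have Tst: "stable V E T" using T by (simp add: maximal_stable_def)
  have finT: "finite T" using Tst finV by (auto simp: stable_def intro: finite_subset)
  have cardT: "card T \<le> card S" using alpha_ge[OF finV Tst] Sc by simp
  have cardT0: "card T0 = card S - card X + 1"
  proof -
    have "card (S - X) = card S - card X" using XS finS by (simp add: card_Diff_subset finite_subset)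
    moreover have "v \<notin> S - X" using v by auto
    moreover have "finite (S - X)" using finS by auto
    ultimately show ?thesis unfolding T0_def by simp
  qed
  have cX: "card X \<ge> 1" using sX finS XS by (metis One_nat_def Suc_leI card_gt_0_iff empty_iff finite_subset)
  define B where "B = {R \<in> Qs. s \<in> R \<and> v \<notin> R}"
  define f where "f R = (SOME r. r \<in> R \<inter> T)" for R
  have fB: "f R \<in> R \<inter> T" if "R \<in> B" for R
  proof -
    have "R \<inter> T \<noteq> {}" using that T cis
      by (auto simp: B_def Qs_def CIS_def strong_clique_def)
    then show ?thesis unfolding f_def by (meson ex_in_conv someI_ex)
  qed
  have vT: "v \<in> T" using T by (auto simp: T0_def)
  have sT: "s \<notin> T" using vT Tst Evs by (auto simp: stable_def)
  have inj: "inj_on f B"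
  proof (rule inj_onI)
    fix R1 R2 assume R: "R1 \<in> B" "R2 \<in> B" "f R1 = f R2"
    have "f R1 \<in> R1 \<inter> T" by (rule fB[OF R(1)])
    have "f R2 \<in> R2 \<inter> T" by (rule fB[OF R(2)])
    have "f R1 \<noteq> s" using \<open>f R1 \<in> R1 \<inter> T\<close> sT by auto
    show "R1 = R2"
      apply (rule two_cliques[OF g df, of R1 R2 s "f R1"])
      using R \<open>f R1 \<in> R1 \<inter> T\<close> \<open>f R2 \<in> R2 \<inter> T\<close> \<open>f R1 \<noteq> s\<close> by (auto simp: B_def Qs_def)
  qed
  have img: "f ` B \<subseteq> T - T0"
  proof
    fix r assume "r \<in> f ` B"
    then obtain R where R: "R \<in> B" "r = f R" by auto
    have rR: "r \<in> R" "r \<in> T" using fB[OF R(1)] R by auto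
    have "r \<noteq> s" using rR sT by auto
    have "r \<noteq> v" using rR R by (auto simp: B_def)
    have "r \<notin> S"
    proof
      assume "r \<in> S"
      then have "r = s" using uniqS[of R r s] rR R s by (auto simp: B_def)
      then show False using \<open>r \<noteq> s\<close> by simp
    qed
    then show "r \<in> T - T0" using rR \<open>r \<noteq> v\<close> by (auto simp: T0_def)
  qed
  have "card B \<le> card (T - T0)"
    using card_inj_on_le[OF inj img] finT by simp
  also have "\<dots> = card T - card T0" using T finT by (simp add: card_Diff_subset finite_subset)
  finally have cB: "card B + 1 \<le> card X" using cardT cardT0 cX by linarith
  have cs: "c s \<le> card B + 1"
  proof -
    have "{R \<in> Qs. s \<in> R} \<subseteq> insert Q B"
    proof
      fix R assume R: "R \<in> {R \<in> Qs. s \<in> R}"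
      show "R \<in> insert Q B"
      proof (cases "v \<in> R")
        case True
        then have "R = Q" using two_cliques[OF g df, of R Q s v] R Q vs by (auto simp: Qs_def)
        then show ?thesis by simp
      qed (use R in \<open>auto simp: B_def\<close>)
    qed
    then have "c s \<le> card (insert Q B)" unfolding c_def
      by (intro card_mono) (auto simp: B_def finQs)
    also have "\<dots> \<le> card B + 1" by (simp add: card_insert_le_m1 B_def finQs card_insert_if)
    finally show ?thesis .
  qed
  have cv: "card X \<le> c v"
  proof -
    define h where "h x = (SOME R. R \<in> Qs \<and> v \<in> R \<and> x \<in> R)" for x
    have hX: "h x \<in> Qs \<and> v \<in> h x \<and> x \<in> h x" if "x \<in> X" for x
    proof -
      have "x \<in> V" using that St by (auto simp: X_def stable_def)
      then have "clique V E {v, x}" using v that by (auto simp: clique_def X_def dest: sym)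
      then obtain R where "maximal_clique V E R" "{v, x} \<subseteq> R" using ext_clique[OF finV] by blast
      then have "\<exists>R. R \<in> Qs \<and> v \<in> R \<and> x \<in> R" by (auto simp: Qs_def)
      then show ?thesis unfolding h_def by (rule someI_ex)
    qed
    have "inj_on h X"
    proof (rule inj_onI)
      fix x y assume "x \<in> X" "y \<in> X" "h x = h y"
      then show "x = y" using hX[of x] hX[of y] uniqS[of "h x" x y] by (auto simp: X_def)
    qed
    moreover have "h ` X \<subseteq> {Q \<in> Qs. v \<in> Q}" using hX by auto
    ultimately show ?thesis unfolding c_def using finQs by (intro card_inj_on_le) auto
  qed
  show ?thesis using cs cB cv by linarith
qed

end



context dcis begin

definition "w Q = 1 / real (c (the_elem (Q \<inter> S)))"

lemma w_s: "Q \<in> Qs \<Longrightarrow> s \<in> Q \<Longrightarrow> s \<in> S \<Longrightarrow> w Q = 1 / real (c s)"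
  using QS_single by (simp add: w_def)

lemma sum_s: assumes s: "s \<in> S" shows "(\<Sum>Q\<in>{Q \<in> Qs. s \<in> Q}. w Q) = 1"
proof -
  have "s \<in> V" using s St by (auto simp: stable_def)
  then have cp: "c s \<ge> 1" by (rule c_pos)
  have "(\<Sum>Q\<in>{Q \<in> Qs. s \<in> Q}. w Q) = (\<Sum>Q\<in>{Q \<in> Qs. s \<in> Q}. 1 / real (c s))"
    using w_s s by (intro sum.cong) auto
  also have "\<dots> = real (c s) * (1 / real (c s))" by (simp add: c_def)
  also have "\<dots> = 1" using cp by simp
  finally show ?thesis .
qed

lemma sum_v: assumes v: "v \<in> V" shows "(\<Sum>Q\<in>{Q \<in> Qs. v \<in> Q}. w Q) \<ge> 1"
proof (cases "v \<in> S")
  case True then show ?thesis using sum_s by simp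
next
  case False
  have cp: "c v \<ge> 1" using v by (rule c_pos)
  have "1 = real (c v) * (1 / real (c v))" using cp by simp
  also have "\<dots> = (\<Sum>Q\<in>{Q \<in> Qs. v \<in> Q}. 1 / real (c v))" by (simp add: c_def)
  also have "\<dots> \<le> (\<Sum>Q\<in>{Q \<in> Qs. v \<in> Q}. w Q)"
  proof (rule sum_mono)
    fix Q assume Q: "Q \<in> {Q \<in> Qs. v \<in> Q}"
    then obtain s where s: "s \<in> Q" "s \<in> S" using meetS by blast
    have "s \<in> V" using s St by (auto simp: stable_def)
    then have "c s \<ge> 1" by (rule c_pos)
    moreover have "c s \<le> c v" using key[OF v False s(2), of Q] Q s by auto
    ultimately have "1 / real (c v) \<le> 1 / real (c s)"
      by (intro divide_left_mono) auto
    then show "1 / real (c v) \<le> w Q" using w_s Q s by auto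
  qed
  finally show ?thesis .
qed

lemma main: "real (card V) \<le> real (alpha V E) * real (omega V E)"
proof -
  have finS: "finite S" using St finV by (auto simp: stable_def intro: finite_subset)
  have "real (card V) = (\<Sum>v\<in>V. 1)" by simp
  also have "\<dots> \<le> (\<Sum>v\<in>V. \<Sum>Q\<in>{Q \<in> Qs. v \<in> Q}. w Q)" by (intro sum_mono sum_v)
  also have "\<dots> = (\<Sum>Q\<in>Qs. \<Sum>v\<in>{v \<in> V. v \<in> Q}. w Q)"
    by (rule sum.swap_restrict[OF finV finQs])
  also have "\<dots> = (\<Sum>Q\<in>Qs. real (card Q) * w Q)"
  proof (rule sum.cong)
    fix Q assume "Q \<in> Qs"
    then have "{v \<in> V. v \<in> Q} = Q" using Qsub by auto
    then show "(\<Sum>v\<in>{v \<in> V. v \<in> Q}. w Q) = real (card Q) * w Q" by simp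
  qed simp
  also have "\<dots> \<le> (\<Sum>Q\<in>Qs. real (omega V E) * w Q)"
  proof (rule sum_mono)
    fix Q assume "Q \<in> Qs"
    then have "card Q \<le> omega V E" using omega_ge[OF finV] by (auto simp: Qs_def maximal_clique_def)
    moreover have "w Q \<ge> 0" by (simp add: w_def)
    ultimately show "real (card Q) * w Q \<le> real (omega V E) * w Q" by (intro mult_right_mono) auto
  qed
  also have "\<dots> = real (omega V E) * (\<Sum>Q\<in>Qs. w Q)" by (simp add: sum_distrib_left)
  also have "(\<Sum>Q\<in>Qs. w Q) = (\<Sum>Q\<in>Qs. \<Sum>s\<in>{s \<in> S. s \<in> Q}. w Q)"
  proof (rule sum.cong)
    fix Q assume Q: "Q \<in> Qs"
    then obtain s where s: "s \<in> Q" "s \<in> S" using meetS by blast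
    then have "{s \<in> S. s \<in> Q} = {s}" using QS_single[OF Q s] by auto
    then show "w Q = (\<Sum>s\<in>{s \<in> S. s \<in> Q}. w Q)" by simp
  qed simp
  also have "\<dots> = (\<Sum>s\<in>S. \<Sum>Q\<in>{Q \<in> Qs. s \<in> Q}. w Q)"
    by (rule sum.swap_restrict[symmetric, OF finS finQs])
  also have "\<dots> = (\<Sum>s\<in>S. 1)" using sum_s by (intro sum.cong) auto
  also have "\<dots> = real (alpha V E)" using Sc by simp
  finally show ?thesis by (simp add: mult.commute)
qed

end

theorem theorem2:
  fixes V :: "'a set" and E :: "'a \<Rightarrow> 'a \<Rightarrow> bool"
  assumes "graph V E" and "diamond_free V E" and "CIS V E"
  shows "alpha V E * omega V E \<ge> card V \<and>
    (\<exists>X. (clique V E X \<or> stable V E X) \<and> real (card X) \<ge> sqrt (real (card V)))"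
proof -
  have finV: "finite V" using assms(1) by (simp add: graph_def)
  obtain S where S: "stable V E S" "card S = alpha V E" using alpha_att[OF finV] by blast
  obtain K where K: "clique V E K" "card K = omega V E" using omega_att[OF finV] by blast
  interpret dcis V E S using assms S by unfold_locales
  have m: "real (card V) \<le> real (alpha V E) * real (omega V E)" by (rule main)
  then have A: "alpha V E * omega V E \<ge> card V" by (simp add: of_nat_mult[symmetric] del: of_nat_mult)
  have "\<exists>X. (clique V E X \<or> stable V E X) \<and> real (card X) \<ge> sqrt (real (card V))"
  proof (cases "alpha V E \<le> omega V E")
    case True
    have "real (card V) \<le> real (omega V E) * real (omega V E)"
    proof -
      have "real (alpha V E) * real (omega V E) \<le> real (omega V E) * real (omega V E)"
        by (rule mult_right_mono) (use True in auto)
      then show ?thesis using m by linarith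
    qed
    then have "sqrt (real (card V)) \<le> real (omega V E)"
      by (simp add: real_le_lsqrt power2_eq_square)
    then show ?thesis using K by (intro exI[of _ K]) auto
  next
    case False
    have "real (card V) \<le> real (alpha V E) * real (alpha V E)"
    proof -
      have "real (alpha V E) * real (omega V E) \<le> real (alpha V E) * real (alpha V E)"
        by (rule mult_left_mono) (use False in auto)
      then show ?thesis using m by linarith
    qed
    then have "sqrt (real (card V)) \<le> real (alpha V E)"
      by (simp add: real_le_lsqrt power2_eq_square)
    then show ?thesis using S by (intro exI[of _ S]) auto
  qed
  with A show ?thesis by blast
qed


end
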